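(* Let $H$ be a real symmetric $n\times n$ matrix and let $\lambda_1,\dotsc,\lambda_n$ be its eigenvalues, listed with multiplicity and in order of decreasing absolute value. Let $C\geq 1$ and $B\geq 1$, and suppose $|\lambda_1|\leq CB$. Put \[ N_H(B)=\#\{\vec{y}\in\mathbb{Z}^n:\ \|\vec{y}\|\leq B,\ \|H\vec{y}\|\leq B\}. \] Then there is a constant $A$ depending only on $C$ and $n$ such that \[ N_H(B)\leq A\min_{1\leq i\leq n}\frac{B^n}{1+|\lambda_1\cdots\lambda_i|}. \]
   Context: $\|\vec{t}\|=\max_i|t_i|$ denotes the supremum norm on $\mathbb{R}^n$. *)

theory Defs
  imports "Jordan_Normal_Form.Char_Poly"
begin

definition supnorm :: "real vec \<Rightarrow> real" where
  "supnorm v = Max (insert 0 {\<bar>v $ i\<bar> | i. i < dim_vec v})"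

text \<open>The list ls consists of the eigenvalues of the n x n matrix H listed with
  multiplicity (i.e. the roots of the characteristic polynomial counted with
  multiplicity), ordered by decreasing absolute value.\<close>
definition eigenvalue_list_abs_desc :: "nat \<Rightarrow> real mat \<Rightarrow> real list \<Rightarrow> bool" where
  "eigenvalue_list_abs_desc n H ls \<longleftrightarrow>
     length ls = n \<and>
     char_poly H = prod_list (map (\<lambda>a. [:- a, 1:]) ls) \<and>
     sorted_wrt (\<lambda>a b. \<bar>b\<bar> \<le> \<bar>a\<bar>) ls"

definition N_H :: "nat \<Rightarrow> real mat \<Rightarrow> real \<Rightarrow> nat" where
  "N_H n H B = card {y \<in> carrier_vec n. (\<forall>i<n. y $ i \<in> \<int>) \<and>
                       supnorm y \<le> B \<and> supnorm (H *\<^sub>v y) \<le> B}"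

end

theory Submission
  imports Defs "Jordan_Normal_Form.Schur_Decomposition"
begin

lemma real_conj_vec[simp]: "conjugate (v :: real vec) = v"
  by (rule eq_vecI, auto)

lemma real_cscalar[simp]: "(v :: real vec) \<bullet>c w = v \<bullet> w"
  by simp

lemma self_sprod_nonneg: "(v :: real vec) \<bullet> v \<ge> 0"
  unfolding scalar_prod_def by (intro sum_nonneg, auto)

lemma orthonormal_completion:
  fixes v :: "real vec"
  assumes v: "v \<in> carrier_vec n" and v0: "v \<noteq> 0\<^sub>v n"
  shows "\<exists>W \<in> carrier_mat n n. transpose_mat W * W = 1\<^sub>m n \<and> (\<exists>c. col W 0 = c \<cdot>\<^sub>v v)"
proof -
  interpret cof_vec_space n "TYPE(real)" .
  define b where "b = basis_completion v"
  from basis_completion[OF v v0, folded b_def]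
  have dist_b: "distinct b" 
    and indep: "\<not> lin_dep (set b)" and b: "set b \<subseteq> carrier_vec n" and hdb: "hd b = v" 
    and len_b: "length b = n" by auto
  have n: "n \<noteq> 0" using v0 v by auto
  from hdb len_b n obtain vs where bv: "b = v # vs" by (cases b, auto)
  define ws where "ws = gram_schmidt n b"
  from gram_schmidt_result[OF b dist_b indep refl, folded ws_def]
  have ws: "set ws \<subseteq> carrier_vec n" "corthogonal ws" "length ws = n" 
    by (auto simp: len_b)
  from gram_schmidt_hd[OF v, of vs, folded bv] have hdws: "hd ws = v" unfolding ws_def .
  define us where "us = map (\<lambda>w. (1 / sqrt (w \<bullet> w)) \<cdot>\<^sub>v w) ws"
  define W where "W = mat_of_cols n us"
  have lus: "length us = n" using ws by (simp add: us_def)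
  have usc: "set us \<subseteq> carrier_vec n" using ws by (auto simp: us_def)
  have W: "W \<in> carrier_mat n n" unfolding W_def using lus by auto
  have colW: "col W i = us ! i" if "i < n" for i
    unfolding W_def using that lus usc by (intro col_mat_of_cols, auto)
  have wsi: "ws ! i \<in> carrier_vec n" if "i < n" for i using ws that by auto
  have orth: "ws ! i \<bullet> ws ! j = 0 \<longleftrightarrow> i \<noteq> j" if "i < n" "j < n" for i j
    using corthogonalD[OF ws(2), of i j] that ws(3) by simp
  have pos: "ws ! i \<bullet> ws ! i > 0" if "i < n" for i
    using orth[OF that that] self_sprod_nonneg[of "ws ! i"] by linarith
  have "transpose_mat W * W = 1\<^sub>m n"
  proof (rule eq_matI)
    fix i j assume i: "i < dim_row (1\<^sub>m n)" and j: "j < dim_col (1\<^sub>m n)"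
    hence i: "i < n" and j: "j < n" by auto
    have "(transpose_mat W * W) $$ (i,j) = col W i \<bullet> col W j"
      using W i j by simp
    also have "\<dots> = us ! i \<bullet> us ! j" using colW i j by simp
    also have "\<dots> = (1 / sqrt (ws!i \<bullet> ws!i)) * (1 / sqrt (ws!j \<bullet> ws!j)) * (ws ! i \<bullet> ws ! j)"
      unfolding us_def using i j ws(3) wsi[OF i] wsi[OF j] by simp
    also have "\<dots> = 1\<^sub>m n $$ (i,j)"
    proof (cases "i = j")
      case True
      then show ?thesis using pos[OF i] i 
        by (simp add: field_simps)
    next
      case False
      then show ?thesis using orth[OF i j] i j by simp
    qed
    finally show "(transpose_mat W * W) $$ (i,j) = 1\<^sub>m n $$ (i,j)" .
  qed (use W in auto)
  moreover have "col W 0 = (1 / sqrt (v \<bullet> v)) \<cdot>\<^sub>v v"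
  proof -
    have "ws ! 0 = v" using hdws n ws(3) by (metis hd_conv_nth list.size(3))
    thus ?thesis using colW[of 0] n ws(3) by (simp add: us_def)
  qed
  ultimately show ?thesis using W by blast
qed

lemma spectral:
  fixes H :: "real mat" and es :: "real list"
  assumes "H \<in> carrier_mat n n" "transpose_mat H = H" "char_poly H = (\<Prod>a\<leftarrow>es. [:-a,1:])"
  shows "\<exists>U \<in> carrier_mat n n. transpose_mat U * U = 1\<^sub>m n \<and>
           H * U = U * mat n n (\<lambda>(i,j). if i = j then es!i else 0)"
  using assms
proof (induct es arbitrary: n H)
  case Nil
  with degree_monic_char_poly[of H n] have n: "n = 0" by auto
  show ?case
    by (rule bexI[of _ "1\<^sub>m 0"], insert Nil n, auto intro!: eq_matI)
next
  case (Cons e es n H)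
  have H: "H \<in> carrier_mat n n" and Hs: "transpose_mat H = H" using Cons by auto
  have cp: "char_poly H = [: -e, 1 :] * (\<Prod>e \<leftarrow> es. [:- e, 1:])" using Cons(4) by auto
  have mon: "monic (\<Prod>e\<leftarrow> es. [:- e, 1:])" by (rule monic_prod_list, auto)
  have deg: "degree (char_poly H) = Suc (degree (\<Prod>e\<leftarrow> es. [:- e, 1:]))" unfolding cp
    by (subst degree_mult_eq, insert mon, auto)
  with degree_monic_char_poly[OF H] have "n \<noteq> 0" by auto
  then obtain m where nm: "n = Suc m" by (cases n, auto)
  have e: "eigenvalue H e" 
    unfolding eigenvalue_root_char_poly[OF H] cp by simp
  define v where "v = find_eigenvector H e"
  from find_eigenvector[OF H e] have "eigenvector H v e" unfolding v_def .
  hence v: "v \<in> carrier_vec n" and v0: "v \<noteq> 0\<^sub>v n" and Hv: "H *\<^sub>v v = e \<cdot>\<^sub>v v"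
    unfolding eigenvector_def using H by auto
  from orthonormal_completion[OF v v0] obtain W c where W: "W \<in> carrier_mat n n"
    and W'W: "transpose_mat W * W = 1\<^sub>m n" and cW: "col W 0 = c \<cdot>\<^sub>v v" by blast
  define W' where "W' = transpose_mat W"
  have W': "W' \<in> carrier_mat n n" unfolding W'_def using W by auto
  have W'W: "W' * W = 1\<^sub>m n" using W'W unfolding W'_def .
  have WW': "W * W' = 1\<^sub>m n" using mat_mult_left_right_inverse[OF W' W W'W] .
  define A' where "A' = W' * H * W"
  have A': "A' \<in> carrier_mat n n" unfolding A'_def using W W' H by auto
  have HW0: "H *\<^sub>v col W 0 = e \<cdot>\<^sub>v col W 0"
    unfolding cW using mult_mat_vec[OF H v, of c] Hv v
    by (simp add: smult_smult_assoc mult.commute)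
  have orthW: "col W i \<bullet> col W j = (if i = j then 1 else 0)" if "i < n" "j < n" for i j
  proof -
    have "(W' * W) $$ (i,j) = col W i \<bullet> col W j" using that W unfolding W'_def by simp
    thus ?thesis using W'W that by simp
  qed
  have A'0: "A' $$ (i,0) = (if i = 0 then e else 0)" if i: "i < n" for i
  proof -
    have "A' $$ (i,0) = (W' * (H * W)) $$ (i,0)" unfolding A'_def using W W' H by simp
    also have "\<dots> = col W i \<bullet> (H *\<^sub>v col W 0)" using W H i nm unfolding W'_def by (simp add: mult_mat_vec_def)
    also have "\<dots> = e * (col W i \<bullet> col W 0)" unfolding HW0 using W i nm by simp
    also have "\<dots> = (if i = 0 then e else 0)" using orthW[OF i, of 0] nm by simp
    finally show ?thesis .
  qed
  have A'sym: "transpose_mat A' = A'"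
  proof -
    have "transpose_mat A' = transpose_mat (W' * (H * W))" unfolding A'_def using W W' H by simp
    also have "\<dots> = transpose_mat (H * W) * transpose_mat W'"
      by (rule transpose_mult[OF W'], insert H W, auto)
    also have "transpose_mat (H * W) = transpose_mat W * transpose_mat H"
      by (rule transpose_mult[OF H W])
    finally show ?thesis unfolding A'_def W'_def Hs using W H by simp
  qed
  have A'symE: "A' $$ (i,j) = A' $$ (j,i)" if "i < n" "j < n" for i j
    using arg_cong[OF A'sym, of "\<lambda>M. M $$ (j,i)"] that A' by simp
  define A1 where "A1 = mat 1 1 (\<lambda>_. e)"
  define A3 where "A3 = mat m m (\<lambda>(i,j). A' $$ (Suc i, Suc j))"
  have A1: "A1 \<in> carrier_mat 1 1" and A3: "A3 \<in> carrier_mat m m" unfolding A1_def A3_def by auto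
  have A'block: "A' = four_block_mat A1 (0\<^sub>m 1 m) (0\<^sub>m m 1) A3"
  proof (rule eq_matI)
    fix i j assume "i < dim_row (four_block_mat A1 (0\<^sub>m 1 m) (0\<^sub>m m 1) A3)"
      "j < dim_col (four_block_mat A1 (0\<^sub>m 1 m) (0\<^sub>m m 1) A3)"
    hence i: "i < n" and j: "j < n" using A1 A3 nm by auto
    show "A' $$ (i, j) = four_block_mat A1 (0\<^sub>m 1 m) (0\<^sub>m m 1) A3 $$ (i, j)"
      using i j A1 A3 nm A'0[OF i] A'0[OF j] A'symE[OF i j]
      by (cases i; cases j; auto simp: A1_def A3_def)
  qed (insert A' A1 A3 nm, auto)
  have A3sym: "transpose_mat A3 = A3"
    by (rule eq_matI, insert A'symE nm, auto simp: A3_def)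
  have "similar_mat_wit A' H W' W" unfolding similar_mat_wit_def Let_def
    using A' H W W' W'W WW' by (auto simp: A'_def)
  hence "similar_mat A' H" unfolding similar_mat_def by blast
  from char_poly_similar[OF this] cp
  have cp': "char_poly A' = [: -e,1 :] * (\<Prod> e \<leftarrow> es. [:- e, 1:])" by simp
  also have "char_poly A' = char_poly A1 * char_poly A3" 
    unfolding A'block
    by (rule char_poly_four_block_zeros_col[OF A1 _ A3], auto)
  also have "char_poly A1 = [: -e,1 :]"
    by (simp add: A1_def char_poly_defs det_def sign_def)
  finally have cp3: "char_poly A3 = (\<Prod> e \<leftarrow> es. [:- e, 1:])"
    by (metis mult_cancel_left pCons_eq_0_iff zero_neq_one)
  from Cons(1)[OF A3 A3sym cp3] obtain U3 where U3: "U3 \<in> carrier_mat m m"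
    and U3U3: "transpose_mat U3 * U3 = 1\<^sub>m m"
    and AU3: "A3 * U3 = U3 * mat m m (\<lambda>(i,j). if i = j then es!i else 0)" by blast
  define D3 where "D3 = mat m m (\<lambda>(i,j). if i = j then es!i else 0)"
  have D3: "D3 \<in> carrier_mat m m" unfolding D3_def by auto
  define F where "F = four_block_mat (1\<^sub>m 1) (0\<^sub>m 1 m) (0\<^sub>m m 1) U3"
  have F: "F \<in> carrier_mat n n" unfolding F_def using U3 nm by auto
  define U where "U = W * F"
  have U: "U \<in> carrier_mat n n" unfolding U_def using W F by auto
  have Ft: "transpose_mat F = four_block_mat (1\<^sub>m 1) (0\<^sub>m 1 m) (0\<^sub>m m 1) (transpose_mat U3)"
    unfolding F_def by (subst transpose_four_block_mat, insert U3, auto)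
  have "transpose_mat U * U = transpose_mat F * F"
  proof -
    have "transpose_mat U = transpose_mat F * W'" unfolding U_def W'_def by (rule transpose_mult[OF W F])
    hence "transpose_mat U * U = (transpose_mat F * W') * (W * F)" unfolding U_def by simp
    also have "\<dots> = transpose_mat F * (W' * (W * F))" 
      by (rule assoc_mult_mat[of _ n n _ n _ n], insert W W' F, auto)
    also have "W' * (W * F) = F" using W W' F W'W by (simp flip: assoc_mult_mat[OF W' W F])
    finally show ?thesis .
  qed
  also have "\<dots> = 1\<^sub>m n" unfolding Ft unfolding F_def
    by (subst mult_four_block_mat, insert U3 U3U3 nm, auto)
  finally have UU: "transpose_mat U * U = 1\<^sub>m n" .
  define D where "D = mat n n (\<lambda>(i,j). if i = j then (e#es)!i else 0)"
  have Dblock: "D = four_block_mat A1 (0\<^sub>m 1 m) (0\<^sub>m m 1) D3"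
    by (rule eq_matI, auto simp: D_def A1_def D3_def nm nth_Cons')
  have HW: "H * W = W * A'"
  proof -
    have "W * A' = W * (W' * (H * W))" unfolding A'_def using W W' H by simp
    also have "\<dots> = (W * W') * (H * W)" by (rule assoc_mult_mat[symmetric, of _ n n _ n _ n], insert W W' H, auto)
    finally show ?thesis unfolding WW' using H W by simp
  qed
  have A'F: "A' * F = F * four_block_mat A1 (0\<^sub>m 1 m) (0\<^sub>m m 1) D3"
    unfolding A'block F_def
    by (subst mult_four_block_mat, insert A1 A3 U3 D3, auto,
        subst mult_four_block_mat, insert A1 A3 U3 D3 AU3, auto simp: D3_def)
  have "H * U = (H * W) * F" unfolding U_def using H W F by simp
  also have "\<dots> = W * (A' * F)" unfolding HW using W A' F by simp
  also have "\<dots> = U * D" unfolding A'F Dblock U_def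
    by (rule assoc_mult_mat[symmetric, of _ n n _ n _ n], insert W F A1 D3 nm, auto)
  finally show ?case using U UU unfolding D_def by blast
qed

lemma prod_take_nth: "i \<le> length xs \<Longrightarrow> prod_list (take i xs) = (\<Prod>j<i. xs ! j)"
proof (induct i)
  case (Suc i)
  hence "take (Suc i) xs = take i xs @ [xs ! i]" by (simp add: take_Suc_conv_app_nth)
  with Suc show ?case by simp
qed simp

lemma supnorm_ge: assumes "i < dim_vec v" shows "\<bar>v $ i\<bar> \<le> supnorm v"
proof -
  have "{\<bar>v $ i\<bar> | i. i < dim_vec v} = (\<lambda>i. \<bar>v $ i\<bar>) ` {..<dim_vec v}" by auto
  hence fin: "finite (insert 0 {\<bar>v $ i\<bar> | i. i < dim_vec v})" by simp
  show ?thesis unfolding supnorm_def by (rule Max_ge[OF fin], insert assms, auto)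
qed

lemma int_vec_sq:
  fixes z :: "real vec"
  assumes z: "z \<in> carrier_vec n" and zi: "\<forall>i<n. z $ i \<in> \<int>" and z0: "z \<noteq> 0\<^sub>v n"
  shows "z \<bullet> z \<ge> 1"
proof -
  obtain k where k: "k < n" and zk: "z $ k \<noteq> 0" using z0 z by (metis eq_vecI carrier_vecD index_zero_vec)
  from zi k obtain m :: int where m: "z $ k = of_int m" by (auto elim: Ints_cases)
  with zk have "m \<noteq> 0" by auto
  hence "1 \<le> \<bar>m\<bar>" by simp
  hence "1 \<le> \<bar>z $ k\<bar>" unfolding m by linarith
  hence "1 * 1 \<le> \<bar>z $ k\<bar> * \<bar>z $ k\<bar>" by (intro mult_mono, auto)
  hence "1 \<le> z $ k * z $ k" by (simp add: abs_mult_self_eq)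
  also have "z $ k * z $ k \<le> (\<Sum>i\<in>{0..<n}. z $ i * z $ i)"
    by (rule member_le_sum, insert k, auto)
  finally show ?thesis unfolding scalar_prod_def using z by simp
qed

theorem lemma2p1:
  fixes n :: nat and C :: real
  assumes "n \<ge> 1" and "C \<ge> 1"
  shows "\<exists>A::real. \<forall>(H::real mat) (B::real) (ls::real list).
           H \<in> carrier_mat n n \<longrightarrow> transpose_mat H = H \<longrightarrow>
           eigenvalue_list_abs_desc n H ls \<longrightarrow>
           B \<ge> 1 \<longrightarrow> \<bar>ls ! 0\<bar> \<le> C * B \<longrightarrow>
           real (N_H n H B) \<le>
             A * Min ((\<lambda>i. B ^ n / (1 + \<bar>prod_list (take i ls)\<bar>)) ` {1..n})"
proof -
  have n1: "n \<ge> 1" and C1: "C \<ge> 1" using assms by auto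
  define A where "A = 2 * ((2 * real n + 2) * C) ^ n"
  show ?thesis
  proof (rule exI[of _ A], intro allI impI)
    fix H :: "real mat" and B :: real and ls :: "real list"
    assume H: "H \<in> carrier_mat n n" and Hs: "transpose_mat H = H"
      and ev: "eigenvalue_list_abs_desc n H ls" and B1: "B \<ge> 1" and l0: "\<bar>ls ! 0\<bar> \<le> C * B"
    from ev have len: "length ls = n" and cp: "char_poly H = (\<Prod>a\<leftarrow>ls. [:-a,1:])"
      and sorted: "sorted_wrt (\<lambda>a b. \<bar>b\<bar> \<le> \<bar>a\<bar>) ls"
      unfolding eigenvalue_list_abs_desc_def by auto
    define lam where "lam j = ls ! j" for j
    have lamC: "\<bar>lam j\<bar> \<le> C * B" if "j < n" for j
    proof (cases "j = 0")
      case False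
      hence "\<bar>ls ! j\<bar> \<le> \<bar>ls ! 0\<bar>" using sorted_wrt_nth_less[OF sorted, of 0 j] that len by auto
      thus ?thesis using l0 unfolding lam_def by simp
    qed (use l0 lam_def in auto)
    from spectral[OF H Hs cp] obtain U where U: "U \<in> carrier_mat n n"
      and UU: "transpose_mat U * U = 1\<^sub>m n"
      and HU: "H * U = U * mat n n (\<lambda>(i,j). if i = j then ls!i else 0)" by blast
    have UU': "U * transpose_mat U = 1\<^sub>m n"
      using mat_mult_left_right_inverse[OF _ U UU] U by auto
    define u where "u j = col U j" for j
    have u: "u j \<in> carrier_vec n" for j unfolding u_def using U by auto
    have Hu: "H *\<^sub>v u j = lam j \<cdot>\<^sub>v u j" if j: "j < n" for j
    proof (rule eq_vecI)
      fix i assume "i < dim_vec (lam j \<cdot>\<^sub>v u j)"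
      hence i: "i < n" using u[of j] by simp
      have dH: "dim_row H = n" and dU: "dim_row U = n" "dim_col U = n" using carrier_matD[OF H] carrier_matD[OF U] by auto
      have c1: "col (mat n n (\<lambda>(i,j). if i = j then ls!i else 0)) j = lam j \<cdot>\<^sub>v unit_vec n j"
        by (rule eq_vecI, insert j, auto simp: lam_def)
      have c2: "row U i \<bullet> (lam j \<cdot>\<^sub>v unit_vec n j) = lam j * (row U i \<bullet> unit_vec n j)"
        by (rule scalar_prod_smult_right, simp add: dU)
      have c3: "row U i \<bullet> unit_vec n j = U $$ (i,j)"
        using scalar_prod_right_unit[where v="row U i" and n=n and i=j] j i dU by simp
      have "(H *\<^sub>v u j) $ i = row H i \<bullet> col U j" unfolding u_def
        by (rule index_mult_mat_vec, simp add: dH i)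
      also have "\<dots> = (H * U) $$ (i,j)" by (rule index_mult_mat(1)[symmetric], auto simp: dH dU i j)
      also have "\<dots> = (U * mat n n (\<lambda>(i,j). if i = j then ls!i else 0)) $$ (i,j)" unfolding HU ..
      also have "\<dots> = row U i \<bullet> col (mat n n (\<lambda>(i,j). if i = j then ls!i else 0)) j"
        by (rule index_mult_mat(1), auto simp: dU i j)
      also have "\<dots> = lam j * U $$ (i,j)" unfolding c1 c2 c3 ..
      finally show "(H *\<^sub>v u j) $ i = (lam j \<cdot>\<^sub>v u j) $ i" using U i j unfolding u_def by simp
    qed (metis H u carrier_matD(1) carrier_vecD dim_mult_mat_vec index_smult_vec(2))
    have Tz: "(transpose_mat U *\<^sub>v z) $ j = u j \<bullet> z" if "j < n" for z j
      using U that unfolding u_def by simp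
    have pars: "(\<Sum>j<n. (u j \<bullet> z)^2) = z \<bullet> z" if z: "z \<in> carrier_vec n" for z
    proof -
      define w where "w = transpose_mat U *\<^sub>v z"
      have w: "w \<in> carrier_vec n" unfolding w_def using U z by auto
      have "w \<bullet> w = z \<bullet> (U *\<^sub>v w)"
        unfolding w_def by (rule transpose_vec_mult_scalar[OF U], insert U z, auto)
      also have "U *\<^sub>v w = (U * transpose_mat U) *\<^sub>v z" unfolding w_def using U z by simp
      also have "\<dots> = z" unfolding UU' using z by simp
      finally have ww: "w \<bullet> w = z \<bullet> z" .
      have Tw: "w $ j = u j \<bullet> z" if "j < n" for j unfolding w_def by (rule Tz[OF that])
      have "w \<bullet> w = (\<Sum>j\<in>{0..<n}. w $ j * w $ j)" unfolding scalar_prod_def using w by simp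
      also have "\<dots> = (\<Sum>j<n. (u j \<bullet> z)^2)" unfolding atLeast0LessThan
        by (intro sum.cong refl, simp add: Tw power2_eq_square)
      finally show ?thesis using ww by simp
    qed
    have HE: "u j \<bullet> (H *\<^sub>v y) = lam j * (u j \<bullet> y)" if j: "j < n" and y: "y \<in> carrier_vec n" for j y
    proof -
      have "(transpose_mat H *\<^sub>v u j) \<bullet> y = u j \<bullet> (H *\<^sub>v y)"
        by (rule transpose_vec_mult_scalar[OF H y u])
      thus ?thesis unfolding Hs Hu[OF j] using u y by simp
    qed
    define r where "r = sqrt (real n)"
    define R where "R = r * B"
    have r0: "r \<ge> 0" and rr: "r * r = real n" unfolding r_def by auto
    have R0: "R \<ge> 0" unfolding R_def using r0 B1 by simp
    have bnd: "\<bar>u j \<bullet> w\<bar> \<le> R" if j: "j < n" and w: "w \<in> carrier_vec n" and wB: "supnorm w \<le> B" for j w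
    proof -
      have "(u j \<bullet> w)^2 \<le> (\<Sum>j<n. (u j \<bullet> w)^2)"
        by (rule member_le_sum, insert j, auto)
      also have "\<dots> = w \<bullet> w" using pars[OF w] .
      also have "w \<bullet> w = (\<Sum>i<n. w $ i * w $ i)" unfolding scalar_prod_def using w by (simp add: atLeast0LessThan)
      also have "\<dots> \<le> (\<Sum>i<n. B * B)"
      proof (rule sum_mono)
        fix i assume "i \<in> {..<n}"
        hence "\<bar>w $ i\<bar> \<le> B" using supnorm_ge[of i w] wB w by auto
        hence "\<bar>w $ i\<bar> * \<bar>w $ i\<bar> \<le> B * B" by (intro mult_mono, auto)
        thus "w $ i * w $ i \<le> B * B" by (simp add: abs_mult_self_eq)
      qed
      also have "\<dots> = R^2" unfolding R_def using rr by (simp add: power2_eq_square algebra_simps)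
      finally have "\<bar>u j \<bullet> w\<bar>^2 \<le> R^2" by simp
      thus ?thesis using R0 power2_le_imp_le by blast
    qed
    define a where "a j = (if lam j = 0 then R else min R (R / \<bar>lam j\<bar>))" for j
    have a0: "a j \<ge> 0" for j unfolding a_def using R0 by auto
    define S where "S = {y \<in> carrier_vec n. (\<forall>i<n. y $ i \<in> \<int>) \<and>
                       supnorm y \<le> B \<and> supnorm (H *\<^sub>v y) \<le> B}"
    have coord: "\<bar>u j \<bullet> y\<bar> \<le> a j" if j: "j < n" and y: "y \<in> S" for j y
    proof -
      from y have yc: "y \<in> carrier_vec n" and y1: "supnorm y \<le> B" and y2: "supnorm (H *\<^sub>v y) \<le> B"
        unfolding S_def by auto
      have b1: "\<bar>u j \<bullet> y\<bar> \<le> R" by (rule bnd[OF j yc y1])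
      have "\<bar>u j \<bullet> (H *\<^sub>v y)\<bar> \<le> R" by (rule bnd[OF j _ y2], insert H yc, auto)
      hence b2: "\<bar>lam j\<bar> * \<bar>u j \<bullet> y\<bar> \<le> R" unfolding HE[OF j yc] by (simp add: abs_mult)
      show ?thesis
      proof (cases "lam j = 0")
        case False
        hence "\<bar>u j \<bullet> y\<bar> \<le> R / \<bar>lam j\<bar>" using b2 by (simp add: pos_le_divide_eq mult.commute)
        thus ?thesis using b1 False unfolding a_def by simp
      qed (use b1 a_def in simp)
    qed
    define I where "I j = {\<lfloor>- (r * a j)\<rfloor> .. \<lfloor>r * a j\<rfloor>}" for j
    define c where "c y = restrict (\<lambda>j. \<lfloor>r * (u j \<bullet> y)\<rfloor>) {..<n}" for y
    have cI: "c ` S \<subseteq> PiE {..<n} I"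
    proof
      fix f assume "f \<in> c ` S"
      then obtain y where y: "y \<in> S" and f: "f = c y" by auto
      show "f \<in> PiE {..<n} I" unfolding f c_def
      proof (rule restrict_PiE_iff[THEN iffD2], intro ballI)
        fix j assume "j \<in> {..<n}"
        hence j: "j < n" by auto
        have "- (r * a j) \<le> r * (u j \<bullet> y)" "r * (u j \<bullet> y) \<le> r * a j"
          using coord[OF j y] r0 mult_left_mono[of "- (u j \<bullet> y)" "a j" r] mult_left_mono[of "u j \<bullet> y" "a j" r] by (auto simp: abs_le_iff)
        thus "\<lfloor>r * (u j \<bullet> y)\<rfloor> \<in> I j" unfolding I_def by (auto intro: floor_mono)
      qed
    qed
    have cinj: "inj_on c S"
    proof
      fix y y' assume y: "y \<in> S" and y': "y' \<in> S" and eq: "c y = c y'"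
      from y y' have yc: "y \<in> carrier_vec n" and yc': "y' \<in> carrier_vec n"
        and yi: "\<forall>i<n. y $ i \<in> \<int>" and yi': "\<forall>i<n. y' $ i \<in> \<int>" unfolding S_def by auto
      define z where "z = y - y'"
      have zc: "z \<in> carrier_vec n" unfolding z_def using yc yc' by auto
      have zi: "\<forall>i<n. z $ i \<in> \<int>" unfolding z_def using yc yc' yi yi' by auto
      have small: "(u j \<bullet> z)^2 < 1 / real n" if j: "j < n" for j
      proof -
        from arg_cong[OF eq, of "\<lambda>f. f j"] j
        have fl: "\<lfloor>r * (u j \<bullet> y)\<rfloor> = \<lfloor>r * (u j \<bullet> y')\<rfloor>" unfolding c_def by simp
        have "\<bar>r * (u j \<bullet> y) - r * (u j \<bullet> y')\<bar> < 1"
          using fl by linarith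
        moreover have "u j \<bullet> z = u j \<bullet> y - u j \<bullet> y'" unfolding z_def
          by (rule scalar_prod_minus_distrib[OF u yc yc'])
        ultimately have "\<bar>r * (u j \<bullet> z)\<bar> < 1" by (simp add: right_diff_distrib)
        hence "\<bar>r * (u j \<bullet> z)\<bar> * \<bar>r * (u j \<bullet> z)\<bar> < 1 * 1"
          by (intro mult_strict_mono', auto)
        hence "real n * (u j \<bullet> z)^2 < 1" unfolding rr[symmetric]
          by (simp add: abs_mult_self_eq power2_eq_square algebra_simps)
        thus ?thesis using n1 by (simp add: field_simps)
      qed
      have "z \<bullet> z = (\<Sum>j<n. (u j \<bullet> z)^2)" using pars[OF zc] by simp
      also have "\<dots> < (\<Sum>j<n. 1 / real n)"
      proof (rule sum_strict_mono[OF finite_lessThan])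
        have "0 \<in> {..<n}" using n1 by simp
        thus "{..<n} \<noteq> {}" by blast
      qed (use small in auto)
      also have "\<dots> = 1" using n1 by simp
      finally have "z \<bullet> z < 1" .
      with int_vec_sq[OF zc zi] have "z = 0\<^sub>v n" by linarith
      show "y = y'"
      proof (rule eq_vecI)
        fix i assume "i < dim_vec y'"
        hence i: "i < n" using yc' by auto
        from arg_cong[OF \<open>z = 0\<^sub>v n\<close>, of "\<lambda>v. v $ i"] i yc yc'
        show "y $ i = y' $ i" unfolding z_def by simp
      qed (insert yc yc', auto)
    qed
    have finI: "finite (PiE {..<n} I)" unfolding I_def by (rule finite_PiE, auto)
    have "N_H n H B = card S" unfolding N_H_def S_def ..
    also have "\<dots> \<le> card (PiE {..<n} I)" by (rule card_inj_on_le[OF cinj cI finI])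
    also have "\<dots> = (\<Prod>j<n. card (I j))" by (rule card_PiE, auto)
    finally have Ncard: "real (N_H n H B) \<le> (\<Prod>j<n. real (card (I j)))"
      by (metis of_nat_le_iff of_nat_prod)
    define D where "D = (2 * real n + 2) * C * B"
    have K: "real (card (I j)) \<le> 2 * r * a j + 2" for j
    proof -
      have "real (card (I j)) = of_int (\<lfloor>r * a j\<rfloor> - \<lfloor>- (r * a j)\<rfloor> + 1)"
      proof -
        have "- (r * a j) \<le> r * a j" using mult_nonneg_nonneg[OF r0 a0[of j]] by linarith
        hence "\<lfloor>- (r * a j)\<rfloor> \<le> \<lfloor>r * a j\<rfloor>" by (rule floor_mono)
        hence "0 \<le> \<lfloor>r * a j\<rfloor> - \<lfloor>- (r * a j)\<rfloor> + 1" by linarith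
        thus ?thesis unfolding I_def by (simp add: card_atLeastAtMost_int)
      qed
      also have "\<dots> \<le> 2 * r * a j + 2" by linarith
      finally show ?thesis .
    qed
    have ra: "r * a j \<le> real n * B" for j
    proof -
      have "a j \<le> R" unfolding a_def by auto
      hence "r * a j \<le> r * R" using r0 by (rule mult_left_mono)
      thus ?thesis unfolding R_def using rr by (simp add: algebra_simps)
    qed
    have KD: "real (card (I j)) \<le> D" for j
    proof -
      have "real (card (I j)) \<le> 2 * real n * B + 2" using K[of j] ra[of j] by linarith
      also have "\<dots> \<le> (2 * real n + 2) * B" using B1 by (simp add: algebra_simps)
      also have "\<dots> = (2 * real n + 2) * B * 1" by simp
      also have "\<dots> \<le> (2 * real n + 2) * B * C" using C1 B1 by (intro mult_left_mono, auto)
      also have "\<dots> = D" unfolding D_def by (simp add: algebra_simps)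
      finally show ?thesis .
    qed
    have lKD: "\<bar>lam j\<bar> * real (card (I j)) \<le> D" if j: "j < n" for j
    proof -
      have la: "\<bar>lam j\<bar> * a j \<le> R"
      proof (cases "lam j = 0")
        case False
        hence "a j \<le> R / \<bar>lam j\<bar>" unfolding a_def by simp
        thus ?thesis using False by (simp add: pos_le_divide_eq mult.commute)
      qed (use R0 in simp)
      have "\<bar>lam j\<bar> * real (card (I j)) \<le> \<bar>lam j\<bar> * (2 * r * a j + 2)"
        using K[of j] by (rule mult_left_mono, simp)
      also have "\<dots> = 2 * r * (\<bar>lam j\<bar> * a j) + 2 * \<bar>lam j\<bar>" by (simp add: algebra_simps)
      also have "\<dots> \<le> 2 * r * R + 2 * (C * B)"
        using la lamC[OF j] r0 by (intro add_mono mult_left_mono, auto)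
      also have "2 * r * R = 2 * real n * B" unfolding R_def using rr by (simp add: algebra_simps)
      also have "2 * real n * B + 2 * (C * B) \<le> D"
      proof -
        have "real n * B * 1 \<le> real n * B * C" using C1 B1 by (intro mult_left_mono, auto)
        thus ?thesis unfolding D_def by (simp add: algebra_simps)
      qed
      finally show ?thesis .
    qed
    have D0: "D \<ge> 0" unfolding D_def using C1 B1 by simp
    have main: "real (N_H n H B) \<le> A * (B ^ n / (1 + \<bar>prod_list (take i ls)\<bar>))" if i: "i \<in> {1..n}" for i
    proof -
      have iln: "i \<le> n" using i by auto
      define P where "P = prod_list (take i ls)"
      have P: "P = (\<Prod>j<i. lam j)" unfolding P_def lam_def by (rule prod_take_nth, insert iln len, auto)
      define Kp where "Kp = (\<Prod>j<n. real (card (I j)))"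
      have split: "{..<n} = {..<i} \<union> {i..<n}" using iln by auto
      have Kp_split: "Kp = (\<Prod>j<i. real (card (I j))) * (\<Prod>j\<in>{i..<n}. real (card (I j)))"
        unfolding Kp_def split by (rule prod.union_disjoint, auto)
      have "Kp \<le> (\<Prod>j<n. D)" unfolding Kp_def by (rule prod_mono, insert KD, auto)
      hence KpD: "Kp \<le> D ^ n" by simp
      have "\<bar>P\<bar> * Kp = (\<Prod>j<i. \<bar>lam j\<bar> * real (card (I j))) * (\<Prod>j\<in>{i..<n}. real (card (I j)))"
        unfolding Kp_split P by (simp add: abs_prod prod.distrib)
      also have "\<dots> \<le> (\<Prod>j<i. D) * (\<Prod>j\<in>{i..<n}. D)"
        by (intro mult_mono prod_mono, insert lKD KD iln D0, auto intro: prod_nonneg)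
      also have "\<dots> = D ^ n" using iln by (simp flip: power_add)
      finally have PKp: "\<bar>P\<bar> * Kp \<le> D ^ n" .
      have N: "real (N_H n H B) \<le> Kp" using Ncard unfolding Kp_def .
      have "real (N_H n H B) * (1 + \<bar>P\<bar>) \<le> Kp * (1 + \<bar>P\<bar>)" using N by (intro mult_right_mono, auto)
      also have "\<dots> = Kp + \<bar>P\<bar> * Kp" by (simp add: algebra_simps)
      also have "\<dots> \<le> 2 * D ^ n" using KpD PKp by simp
      also have "2 * D ^ n = A * B ^ n" unfolding A_def D_def by (simp add: power_mult_distrib)
      finally have "real (N_H n H B) * (1 + \<bar>P\<bar>) \<le> A * B ^ n" .
      hence "real (N_H n H B) \<le> A * B ^ n / (1 + \<bar>P\<bar>)" by (simp add: pos_le_divide_eq add_pos_nonneg)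
      thus ?thesis unfolding P_def by simp
    qed
    let ?M = "(\<lambda>i. B ^ n / (1 + \<bar>prod_list (take i ls)\<bar>)) ` {1..n}"
    have "Min ?M \<in> ?M" by (rule Min_in, insert n1, auto)
    then obtain i where i: "i \<in> {1..n}" and Mi: "Min ?M = B ^ n / (1 + \<bar>prod_list (take i ls)\<bar>)" by auto
    show "real (N_H n H B) \<le> A * Min ?M" unfolding Mi by (rule main[OF i])
  qed
qed

end
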